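(* Let $\varphi\in H^\infty$ be an outer function. Then the analytic Toeplitz operator $T_\varphi$ is embeddable into a $C_0$-semigroup of analytic Toeplitz operators on $H^2$.
   Context: $H^2$ is the Hardy space and $H^\infty$ the bounded analytic functions on the open unit disc $\mathbb{D}$. An outer function is one of the form $c\exp\left(\int_{\mathbb{T}}\frac{\zeta+z}{\zeta-z}\log k(\zeta)\,dm(\zeta)\right)$ with $|c|=1$ and $k>0$, $\log k\in L^1(\mathbb{T})$. For $\psi\in H^\infty$, the analytic Toeplitz operator $T_\psi$ is multiplication by $\psi$ on $H^2$. A bounded operator $T$ is embeddable into a $C_0$-semigroup of analytic Toeplitz operators if there is a strongly continuous semigroup $(T_t)_{t\ge0}$ ($T_0=\mathrm{Id}$, $T_{t+s}=T_tT_s$) with each $T_t$ an analytic Toeplitz operator and $T_1=T$. *)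

theory Defs
  imports "HOL-Analysis.Analysis"
begin

abbreviation unit_disc :: "complex set" where
  "unit_disc \<equiv> ball 0 1"

definition h2_mean :: "(complex \<Rightarrow> complex) \<Rightarrow> real \<Rightarrow> real" where
  "h2_mean f r = integral {0..2*pi} (\<lambda>t. (cmod (f (of_real r * cis t)))^2) / (2*pi)"

definition H2 :: "(complex \<Rightarrow> complex) set" where
  "H2 = {f. f holomorphic_on unit_disc \<and> bdd_above (h2_mean f ` {0..<1})}"

definition h2_norm :: "(complex \<Rightarrow> complex) \<Rightarrow> real" where
  "h2_norm f = sqrt (SUP r\<in>{0..<1}. h2_mean f r)"

definition Hinf :: "(complex \<Rightarrow> complex) set" where
  "Hinf = {f. f holomorphic_on unit_disc \<and> bounded (f ` unit_disc)}"

text \<open>Outer functions: c exp(\<integral> (\<zeta>+z)/(\<zeta>-z) log k(\<zeta>) dm(\<zeta>)) with |c|=1, k>0 on the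
circle and log k integrable; m is normalised arc length, parametrised by \<zeta> = e^{it}.\<close>
definition outer :: "(complex \<Rightarrow> complex) \<Rightarrow> bool" where
  "outer f \<longleftrightarrow> (\<exists>c k. cmod c = 1 \<and> (\<forall>t. k (cis t) > (0::real)) \<and>
     (\<lambda>t. ln (k (cis t))) absolutely_integrable_on {0..2*pi} \<and>
     (\<forall>z\<in>unit_disc. f z = c * exp (integral {0..2*pi}
        (\<lambda>t. (cis t + z) / (cis t - z) * of_real (ln (k (cis t)))) / (2*pi))))"

text \<open>Operators on H^2 are modelled as maps on functions, acting on elements of H2
and compared by their values on the disc.  T is the analytic Toeplitz operator with
symbol psi.\<close>
definition is_toeplitz_with :: "(complex \<Rightarrow> complex) \<Rightarrow> ((complex \<Rightarrow> complex) \<Rightarrow> (complex \<Rightarrow> complex)) \<Rightarrow> bool" where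
  "is_toeplitz_with \<psi> T \<longleftrightarrow> (\<forall>f\<in>H2. \<forall>z\<in>unit_disc. T f z = \<psi> z * f z)"

definition analytic_toeplitz_op :: "((complex \<Rightarrow> complex) \<Rightarrow> (complex \<Rightarrow> complex)) \<Rightarrow> bool" where
  "analytic_toeplitz_op T \<longleftrightarrow> (\<exists>\<psi>\<in>Hinf. is_toeplitz_with \<psi> T)"

definition C0_semigroup_H2 :: "(real \<Rightarrow> (complex \<Rightarrow> complex) \<Rightarrow> (complex \<Rightarrow> complex)) \<Rightarrow> bool" where
  "C0_semigroup_H2 T \<longleftrightarrow>
     (\<forall>t\<ge>0. \<forall>f\<in>H2. T t f \<in> H2) \<and>
     (\<forall>f\<in>H2. \<forall>z\<in>unit_disc. T 0 f z = f z) \<and>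
     (\<forall>t\<ge>0. \<forall>s\<ge>0. \<forall>f\<in>H2. \<forall>z\<in>unit_disc. T (t+s) f z = T t (T s f) z) \<and>
     (\<forall>f\<in>H2. \<forall>t0\<ge>0. ((\<lambda>t. h2_norm (\<lambda>z. T t f z - T t0 f z)) \<longlongrightarrow> 0) (at t0 within {0..}))"

definition embeddable_toeplitz_semigroup :: "((complex \<Rightarrow> complex) \<Rightarrow> (complex \<Rightarrow> complex)) \<Rightarrow> bool" where
  "embeddable_toeplitz_semigroup S \<longleftrightarrow>
     (\<exists>T. C0_semigroup_H2 T \<and> (\<forall>t\<ge>0. analytic_toeplitz_op (T t)) \<and>
          (\<forall>f\<in>H2. \<forall>z\<in>unit_disc. T 1 f z = S f z))"

end

theory Submission
  imports Defs "HOL-Complex_Analysis.Complex_Analysis"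
begin


lemma cis_int_integral:
  fixes n m :: nat
  shows "((\<lambda>t. cis (real n * t) * cnj (cis (real m * t))) has_integral (if n = m then 2*pi else 0)) {0..2*pi}"
proof (cases "n = m")
  case True
  then show ?thesis using has_integral_const_real[of "1::complex" 0 "2*pi"]
    by (simp add: cis_cnj cis_mult scaleR_conv_of_real) 
next
  case False
  define k where "k = real n - real m"
  have k0: "k \<noteq> 0" using False by (simp add: k_def)
  have eq: "cis (real n * t) * cnj (cis (real m * t)) = cis (k * t)" for t
    by (simp add: cis_cnj cis_mult k_def algebra_simps)
  have d: "((\<lambda>t. exp (\<i> * of_real k * of_real t) / (\<i> * of_real k)) has_vector_derivative cis (k*x)) (at x within {0..2*pi})" for x
  proof -
    have "((\<lambda>z. exp (\<i> * of_real k * z) / (\<i> * of_real k)) has_field_derivative exp (\<i> * of_real k * of_real x)) (at (of_real x))"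
      using k0 by (auto intro!: derivative_eq_intros)
    from has_vector_derivative_real_field[OF this] show ?thesis
      by (simp add: cis_conv_exp mult_ac)
  qed
  have "((\<lambda>t. cis (k*t)) has_integral (exp (\<i> * of_real k * of_real (2*pi)) / (\<i> * of_real k) - exp (\<i> * of_real k * of_real 0) / (\<i> * of_real k))) {0..2*pi}"
    by (rule fundamental_theorem_of_calculus) (use d in auto)
  moreover have "exp (\<i> * of_real k * of_real (2*pi)) = 1"
  proof -
    have "k \<in> \<int>" by (simp add: k_def)
    then have "cis (2*pi*k) = 1" by (rule cis_multiple_2pi)
    then show ?thesis by (simp add: cis_conv_exp mult_ac)
  qed
  ultimately show ?thesis using False by (simp add: eq)
qed

lemma orth_sum:
  fixes b :: "nat \<Rightarrow> complex"
  shows "((\<lambda>t. (cmod (\<Sum>n<N. b n * cis (real n * t)))^2) has_integral (2*pi * (\<Sum>n<N. (cmod (b n))^2))) {0..2*pi}"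
proof -
  define G where "G t = (\<Sum>n<N. \<Sum>m<N. b n * cnj (b m) * (cis (real n * t) * cnj (cis (real m * t))))" for t
  have GI: "(G has_integral (\<Sum>n<N. \<Sum>m<N. b n * cnj (b m) * (if n = m then 2*pi else 0))) {0..2*pi}"
    unfolding G_def
    by (intro has_integral_sum has_integral_mult_right cis_int_integral finite_lessThan)
  have "(\<Sum>n<N. \<Sum>m<N. b n * cnj (b m) * (if n = m then 2*pi else 0)) = (\<Sum>n<N. b n * cnj (b n) * 2*pi)"
    by (simp add: if_distrib mult.assoc cong: if_cong)
  also have "\<dots> = of_real (2*pi * (\<Sum>n<N. (cmod (b n))^2))"
    by (simp add: complex_norm_square sum_distrib_left mult_ac del: of_real_power)
  finally have GI2: "(G has_integral of_real (2*pi * (\<Sum>n<N. (cmod (b n))^2))) {0..2*pi}"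
    using GI by simp
  have GE: "G t = of_real ((cmod (\<Sum>n<N. b n * cis (real n * t)))^2)" for t
  proof -
    have "of_real ((cmod (\<Sum>n<N. b n * cis (real n * t)))^2) = (\<Sum>n<N. b n * cis (real n * t)) * cnj (\<Sum>n<N. b n * cis (real n * t))"
      by (rule complex_norm_square)
    also have "\<dots> = (\<Sum>n<N. b n * cis (real n * t)) * (\<Sum>m<N. cnj (b m) * cnj (cis (real m * t)))"
      by simp
    also have "\<dots> = G t" unfolding G_def sum_product by (simp add: mult_ac)
    finally show ?thesis by simp
  qed
  have "((Re \<circ> G) has_integral Re (of_real (2*pi * (\<Sum>n<N. (cmod (b n))^2)))) {0..2*pi}"
    by (rule has_integral_linear[OF GI2 bounded_linear_Re])
  then show ?thesis by (simp add: o_def GE)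
qed
lemma parseval:
  fixes a :: "nat \<Rightarrow> complex"
  assumes ser: "\<And>z. z \<in> ball 0 1 \<Longrightarrow> (\<lambda>n. a n * z^n) sums g z" and r: "0 \<le> r" "r < 1"
  shows "(\<lambda>n. (cmod (a n))^2 * r^(2*n)) sums h2_mean g r"
proof -
  define \<rho> where "\<rho> = (1 + r) / 2"
  have "\<bar>\<rho>\<bar> < 1" using r by (simp add: \<rho>_def)
  then have "of_real \<rho> \<in> ball (0::complex) 1" by (simp only: mem_ball dist_0_norm norm_minus_commute norm_of_real)
  then have "summable (\<lambda>n. a n * (of_real \<rho>)^n)" using ser sums_summable by blast
  then have summ: "summable (\<lambda>n. norm (a n * (of_real r)^n))"
  proof (rule powser_insidea)
    show "norm (complex_of_real r) < norm (complex_of_real \<rho>)"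
      by (simp only: norm_of_real) (use r in \<open>simp add: \<rho>_def\<close>)
  qed
  define A where "A = (\<Sum>n. norm (a n * (of_real r)^n))"
  define S where "S N t = (\<Sum>n<N. (a n * of_real r ^ n) * cis (real n * t))" for N t
  have Sx: "S N t = (\<Sum>n<N. a n * (of_real r * cis t)^n)" for N t
    unfolding S_def by (intro sum.cong refl) (simp only: power_mult_distrib Complex.DeMoivre mult.assoc)
  have SA: "cmod (S N t) \<le> A" for N t
  proof -
    have "cmod (S N t) \<le> (\<Sum>n<N. cmod (a n * of_real r ^ n * cis (real n * t)))"
      unfolding S_def by (rule norm_sum)
    also have "\<dots> = (\<Sum>n<N. norm (a n * (of_real r)^n))" by (simp add: norm_mult)
    also have "\<dots> \<le> A" unfolding A_def
      by (rule sum_le_suminf[OF summ]) auto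
    finally show ?thesis .
  qed
  have A0: "0 \<le> A" using SA[of 0 0] by (simp add: S_def)
  have Fint: "((\<lambda>t. (cmod (S N t))^2) has_integral (2*pi * (\<Sum>n<N. (cmod (a n))^2 * r^(2*n)))) {0..2*pi}" for N
  proof -
    have "((\<lambda>t. (cmod (S N t))^2) has_integral (2*pi * (\<Sum>n<N. (cmod (a n * of_real r ^ n))^2))) {0..2*pi}"
      unfolding S_def by (rule orth_sum)
    moreover have "(cmod (a n * of_real r ^ n))^2 = (cmod (a n))^2 * r^(2*n)" for n
      using r by (simp add: norm_mult norm_power power_mult_distrib power_mult[symmetric] mult.commute[of 2])
    ultimately show ?thesis by simp
  qed
  have conv: "(\<lambda>N. (cmod (S N t))^2) \<longlonglongrightarrow> (cmod (g (of_real r * cis t)))^2" for t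
  proof -
    have "of_real r * cis t \<in> ball (0::complex) 1" using r by (simp add: norm_mult)
    then have "(\<lambda>N. S N t) \<longlonglongrightarrow> g (of_real r * cis t)"
      using ser unfolding Sx sums_def by blast
    then show ?thesis by (intro tendsto_intros)
  qed
  have dc: "(\<lambda>N. integral {0..2*pi} (\<lambda>t. (cmod (S N t))^2)) \<longlonglongrightarrow> integral {0..2*pi} (\<lambda>t. (cmod (g (of_real r * cis t)))^2)"
  proof (rule dominated_convergence(2))
    show "(\<lambda>t. (cmod (S N t))^2) integrable_on {0..2*pi}" for N using Fint by blast
    show "(\<lambda>t. A^2) integrable_on {0..2*pi}" by (rule integrable_const_ivl)
    show "norm ((cmod (S N t))^2) \<le> A^2" for N t using SA[of N t] by (simp add: power_mono)
    show "(\<lambda>N. (cmod (S N t))^2) \<longlonglongrightarrow> (cmod (g (of_real r * cis t)))^2" for t by (rule conv)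
  qed
  then have "(\<lambda>N. 2*pi * (\<Sum>n<N. (cmod (a n))^2 * r^(2*n))) \<longlonglongrightarrow> integral {0..2*pi} (\<lambda>t. (cmod (g (of_real r * cis t)))^2)"
  proof -
    have eqN: "integral {0..2*pi} (\<lambda>t. (cmod (S N t))^2) = 2*pi * (\<Sum>n<N. (cmod (a n))^2 * r^(2*n))" for N
      using Fint integral_unique by blast
    show ?thesis using dc unfolding eqN .
  qed
  then have "(\<lambda>N. (2*pi * (\<Sum>n<N. (cmod (a n))^2 * r^(2*n))) / (2*pi)) \<longlonglongrightarrow> h2_mean g r"
    unfolding h2_mean_def by (intro tendsto_intros) auto
  then show ?thesis unfolding sums_def by simp
qed
lemma circ_in: "0 \<le> r \<Longrightarrow> r < 1 \<Longrightarrow> complex_of_real r * cis t \<in> ball 0 1"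
  by (simp add: norm_mult)

lemma cont_circ:
  assumes "continuous_on (ball 0 1) f" "0 \<le> r" "r < 1"
  shows "continuous_on S (\<lambda>t. (cmod (f (complex_of_real r * cis t)))^2)"
proof -
  have "continuous_on S (\<lambda>t. complex_of_real r * cis t)"
    by (intro continuous_intros)
  then have "continuous_on S (\<lambda>t. f (complex_of_real r * cis t))"
    by (rule continuous_on_compose2[OF assms(1)]) (use assms circ_in in auto)
  then show ?thesis by (intro continuous_intros)
qed

lemma circ_integrable:
  assumes "continuous_on (ball 0 1) f" "0 \<le> r" "r < 1"
  shows "(\<lambda>t. (cmod (f (complex_of_real r * cis t)))^2) integrable_on {0..2*pi}"
  by (intro integrable_continuous_interval cont_circ[OF assms])

lemma h2_mean_nonneg: "0 \<le> h2_mean f r"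
proof -
  have "0 \<le> integral {0..2*pi} (\<lambda>t. (cmod (f (complex_of_real r * cis t)))^2)"
  proof (cases "(\<lambda>t. (cmod (f (complex_of_real r * cis t)))^2) integrable_on {0..2*pi}")
    case True then show ?thesis by (rule integral_nonneg) auto
  next
    case False then show ?thesis by (simp add: not_integrable_integral)
  qed
  then show ?thesis unfolding h2_mean_def by simp
qed

lemma h2_mean_mono2:
  assumes cf: "continuous_on (ball 0 1) f" and c1: "continuous_on (ball 0 1) h1" and c2: "continuous_on (ball 0 1) h2"
    and le: "\<And>z. z \<in> ball 0 1 \<Longrightarrow> (cmod (f z))^2 \<le> A * (cmod (h1 z))^2 + B * (cmod (h2 z))^2"
    and r: "0 \<le> r" "r < 1"
  shows "h2_mean f r \<le> A * h2_mean h1 r + B * h2_mean h2 r"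
proof -
  note i0 = circ_integrable[OF cf r] and i1 = circ_integrable[OF c1 r] and i2 = circ_integrable[OF c2 r]
  have "integral {0..2*pi} (\<lambda>t. (cmod (f (complex_of_real r * cis t)))^2)
     \<le> integral {0..2*pi} (\<lambda>t. A * (cmod (h1 (complex_of_real r * cis t)))^2 + B * (cmod (h2 (complex_of_real r * cis t)))^2)"
    by (rule integral_le[OF i0]) (use i1 i2 le circ_in r in \<open>auto intro!: integrable_add integrable_on_mult_right\<close>)
  also have "\<dots> = A * integral {0..2*pi} (\<lambda>t. (cmod (h1 (complex_of_real r * cis t)))^2) + B * integral {0..2*pi} (\<lambda>t. (cmod (h2 (complex_of_real r * cis t)))^2)"
    using i1 i2 by (simp add: integral_add integrable_on_mult_right)
  finally have "integral {0..2*pi} (\<lambda>t. (cmod (f (complex_of_real r * cis t)))^2) / (2*pi) \<le> (A * integral {0..2*pi} (\<lambda>t. (cmod (h1 (complex_of_real r * cis t)))^2) + B * integral {0..2*pi} (\<lambda>t. (cmod (h2 (complex_of_real r * cis t)))^2)) / (2*pi)"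
    by (rule divide_right_mono) simp
  then show ?thesis unfolding h2_mean_def by (simp add: add_divide_distrib)
qed

lemma h2_mean_mono1:
  assumes cf: "continuous_on (ball 0 1) f" and c1: "continuous_on (ball 0 1) h1"
    and le: "\<And>z. z \<in> ball 0 1 \<Longrightarrow> (cmod (f z))^2 \<le> A * (cmod (h1 z))^2"
    and r: "0 \<le> r" "r < 1"
  shows "h2_mean f r \<le> A * h2_mean h1 r"
  using h2_mean_mono2[OF cf c1 c1, of A 0] le r by simp

lemma h2_mean_one: "h2_mean (\<lambda>z. 1) r = 1"
  unfolding h2_mean_def by simp

lemma h2_mean_bound:
  assumes cf: "continuous_on (ball 0 1) f" and le: "\<And>z. z \<in> ball 0 1 \<Longrightarrow> cmod (f z) \<le> K"
    and r: "0 \<le> r" "r < 1"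
  shows "h2_mean f r \<le> K^2"
proof -
  have "h2_mean f r \<le> K^2 * h2_mean (\<lambda>z. 1) r"
    by (rule h2_mean_mono1[OF cf _ _ r]) (use le in \<open>auto intro: power_mono\<close>)
  then show ?thesis by (simp add: h2_mean_one)
qed

lemma sq_ineq:
  fixes F G C P p q :: real
  assumes "0 \<le> G" "G \<le> C" "0 \<le> p" "p \<le> P" "0 \<le> q" "0 \<le> F" "F \<le> G * (p + q)"
  shows "F^2 \<le> 2*P^2 * G^2 + 2*C^2 * q^2"
proof -
  have 1: "F^2 \<le> (G*(p+q))^2" using assms by (intro power_mono) auto
  have "0 \<le> (p-q)^2" by simp
  then have 2: "(p+q)^2 \<le> 2*(p^2+q^2)" by (simp add: power2_eq_square algebra_simps)
  have 3: "G^2*p^2 \<le> G^2*P^2" using assms by (intro mult_left_mono power_mono) auto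
  have 4: "G^2*q^2 \<le> C^2*q^2" using assms by (intro mult_right_mono power_mono) auto
  have "(G*(p+q))^2 = G^2*(p+q)^2" by (simp add: power_mult_distrib)
  also have "\<dots> \<le> G^2*(2*(p^2+q^2))" using 2 by (intro mult_left_mono) auto
  finally show ?thesis using 1 3 4 by (simp add: algebra_simps)
qed
lemma E_lim: fixes w :: complex and M :: real assumes "1 \<le> M"
  shows "((\<lambda>s. (cmod (exp (complex_of_real s * w) - 1))^2 - (cmod (exp (complex_of_real s * w)))^2 + (M powr s)^2) \<longlongrightarrow> 0) (at 0)"
proof -
  have "((\<lambda>s. (cmod (exp (complex_of_real s * w) - 1))^2 - (cmod (exp (complex_of_real s * w)))^2 + (M powr s)^2) \<longlongrightarrow> 
     (cmod (exp (complex_of_real 0 * w) - 1))^2 - (cmod (exp (complex_of_real 0 * w)))^2 + (M powr 0)^2) (at 0)"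
    using assms by (intro tendsto_intros) auto
  then show ?thesis using assms by simp
qed


definition psi :: "(complex \<Rightarrow> complex) \<Rightarrow> real \<Rightarrow> complex \<Rightarrow> complex" where
  "psi v s z = exp (complex_of_real s * v z)"

lemma psi_holo: "v holomorphic_on A \<Longrightarrow> psi v s holomorphic_on A"
  unfolding psi_def by (intro holomorphic_intros)

lemma psi_bound:
  assumes bnd: "\<And>z. z \<in> ball 0 1 \<Longrightarrow> exp (Re (v z)) \<le> M" and "0 \<le> s" "z \<in> ball 0 1"
  shows "cmod (psi v s z) \<le> M powr s"
proof -
  have "cmod (psi v s z) = exp (Re (v z)) powr s"
    unfolding psi_def by (simp add: norm_exp_eq_Re powr_def)
  also have "\<dots> \<le> M powr s" using assms by (intro powr_mono2) auto
  finally show ?thesis .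
qed

lemma psi_bound1:
  assumes bnd: "\<And>z. z \<in> ball 0 1 \<Longrightarrow> exp (Re (v z)) \<le> M" and M: "1 \<le> M" and "0 \<le> s" "s \<le> T" "z \<in> ball 0 1"
  shows "cmod (psi v s z) \<le> M powr T"
  using psi_bound[OF bnd, where s=s and z=z] powr_mono[of s T M] assms by fastforce

lemma H2_coeffs:
  assumes f: "f \<in> H2"
  obtains a where "\<And>z. z \<in> ball 0 1 \<Longrightarrow> (\<lambda>n. a n * z^n) sums f z" "summable (\<lambda>n. (cmod (a n))^2)"
proof -
  have holf: "f holomorphic_on ball 0 1" using f by (simp add: H2_def)
  define a where "a n = (deriv ^^ n) f 0 / fact n" for n
  have ser: "(\<lambda>n. a n * z^n) sums f z" if "z \<in> ball 0 1" for z
    using holomorphic_power_series[OF holf that] by (simp add: a_def)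
  have "bdd_above (h2_mean f ` {0..<1})" using f by (simp add: H2_def)
  then obtain B where "\<forall>x\<in>h2_mean f ` {0..<1}. x \<le> B" by (auto simp: bdd_above_def)
  then have B: "\<And>r. r \<in> {0..<1} \<Longrightarrow> h2_mean f r \<le> B" by blast
  have "summable (\<lambda>n. (cmod (a n))^2)"
  proof (rule summableI_nonneg_bounded)
    show "0 \<le> (cmod (a n))^2" for n by simp
    show "(\<Sum>i<n. (cmod (a i))^2) \<le> B" for n
    proof (rule tendsto_le[of "at_left 1"])
      show "at_left (1::real) \<noteq> bot" by simp
      show "((\<lambda>r. B) \<longlongrightarrow> B) (at_left 1)" by simp
      have "((\<lambda>r. \<Sum>i<n. (cmod (a i))^2 * r^(2*i)) \<longlongrightarrow> (\<Sum>i<n. (cmod (a i))^2 * 1^(2*i))) (at_left 1)"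
        by (intro tendsto_intros)
      then show "((\<lambda>r. \<Sum>i<n. (cmod (a i))^2 * r^(2*i)) \<longlongrightarrow> (\<Sum>i<n. (cmod (a i))^2)) (at_left 1)"
        by simp
      have "eventually (\<lambda>r. r \<in> {0<..<1}) (at_left (1::real))"
        by (rule eventually_at_left_real) simp
      then show "eventually (\<lambda>r. (\<Sum>i<n. (cmod (a i))^2 * r^(2*i)) \<le> B) (at_left 1)"
      proof (rule eventually_mono)
        fix r :: real assume r: "r \<in> {0<..<1}"
        have sm: "(\<lambda>n. (cmod (a n))^2 * r^(2*n)) sums h2_mean f r"
          by (rule parseval[OF ser]) (use r in auto)
        have "(\<Sum>i<n. (cmod (a i))^2 * r^(2*i)) \<le> h2_mean f r"
          using sum_le_suminf[of "\<lambda>i. (cmod (a i))^2 * r^(2*i)" "{..<n}"] sm r by (auto simp: sums_iff)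
        also have "\<dots> \<le> B" using B r by auto
        finally show "(\<Sum>i<n. (cmod (a i))^2 * r^(2*i)) \<le> B" .
      qed
    qed
  qed
  with ser that show ?thesis by blast
qed

lemma tail_approx:
  fixes a :: "nat \<Rightarrow> complex"
  assumes ser: "\<And>z. z \<in> ball 0 1 \<Longrightarrow> (\<lambda>n. a n * z^n) sums f z"
    and sa: "summable (\<lambda>n. (cmod (a n))^2)" and eta: "\<eta> > 0"
  obtains N where "\<And>r. 0 \<le> r \<Longrightarrow> r < 1 \<Longrightarrow> h2_mean (\<lambda>z. f z - (\<Sum>n<N. a n * z^n)) r \<le> \<eta>"
proof -
  obtain N where N: "\<And>n. n \<ge> N \<Longrightarrow> norm (\<Sum>i. (cmod (a (i + n)))^2) < \<eta>"
    using suminf_exist_split[OF eta sa] by blast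
  define y where "y n = (if n < N then 0 else (cmod (a n))^2)" for n
  have sy: "summable y"
    by (rule summable_comparison_test[OF _ sa]) (auto simp: y_def)
  have yeq: "suminf y = (\<Sum>i. (cmod (a (i + N)))^2)"
    using suminf_split_initial_segment[OF sy, of N] by (simp add: y_def)
  have "suminf y < \<eta>" using N[of N] yeq by simp
  have qser: "(\<lambda>n. (if n < N then 0 else a n) * z^n) sums (f z - (\<Sum>n<N. a n * z^n))" if z: "z \<in> ball 0 1" for z
  proof -
    have "(\<lambda>n. a n * z^n - (if n \<in> {..<N} then a n * z^n else 0)) sums (f z - (\<Sum>n\<in>{..<N}. a n * z^n))"
      by (intro sums_diff ser z sums_If_finite_set) simp
    moreover have "(\<lambda>n. a n * z^n - (if n \<in> {..<N} then a n * z^n else 0)) = (\<lambda>n. (if n < N then 0 else a n) * z^n)"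
      by auto
    ultimately show ?thesis by simp
  qed
  show ?thesis
  proof (rule that)
    fix r :: real assume r: "0 \<le> r" "r < 1"
    have sm: "(\<lambda>n. (cmod (if n < N then 0 else a n))^2 * r^(2*n)) sums h2_mean (\<lambda>z. f z - (\<Sum>n<N. a n * z^n)) r"
      by (rule parseval[OF qser r])
    have le: "(cmod (if n < N then 0 else a n))^2 * r^(2*n) \<le> y n" for n
    proof -
      have "r^(2*n) \<le> 1" using r by (intro power_le_one) auto
      then show ?thesis unfolding y_def by (auto intro: mult_left_le)
    qed
    have "h2_mean (\<lambda>z. f z - (\<Sum>n<N. a n * z^n)) r \<le> suminf y"
      using suminf_le[OF le sums_summable[OF sm] sy] sm by (simp add: sums_iff)
    then show "h2_mean (\<lambda>z. f z - (\<Sum>n<N. a n * z^n)) r \<le> \<eta>"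
      using \<open>suminf y < \<eta>\<close> by simp
  qed
qed

lemma mean_minus_one:
  assumes holh: "h holomorphic_on ball 0 1" and r: "0 \<le> r" "r < 1"
  shows "h2_mean (\<lambda>z. h z - 1) r = (cmod (h 0 - 1))^2 - (cmod (h 0))^2 + h2_mean h r"
proof -
  define c where "c n = (deriv ^^ n) h 0 / fact n" for n
  have c0: "c 0 = h 0" by (simp add: c_def)
  have ser: "(\<lambda>n. c n * z^n) sums h z" if "z \<in> ball 0 1" for z
    using holomorphic_power_series[OF holh that] by (simp add: c_def)
  have serg: "(\<lambda>n. (c n - (if n = 0 then 1 else 0)) * z^n) sums (h z - 1)" if z: "z \<in> ball 0 1" for z
  proof -
    have "(\<lambda>n. c n * z^n - (if n = 0 then z^n else 0)) sums (h z - z^0)"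
      by (intro sums_diff ser z sums_single)
    moreover have "(\<lambda>n. c n * z^n - (if n = 0 then z^n else 0)) = (\<lambda>n. (c n - (if n = 0 then 1 else 0)) * z^n)"
      by (auto simp: algebra_simps)
    ultimately show ?thesis by simp
  qed
  have A: "(\<lambda>n. (cmod (c n - (if n = 0 then 1 else 0)))^2 * r^(2*n)) sums h2_mean (\<lambda>z. h z - 1) r"
    by (rule parseval[OF serg r])
  have B: "(\<lambda>n. (cmod (c n))^2 * r^(2*n)) sums h2_mean h r"
    by (rule parseval[OF ser r])
  have D: "(\<lambda>n. (cmod (c n - (if n = 0 then 1 else 0)))^2 * r^(2*n) - (cmod (c n))^2 * r^(2*n)) sums (h2_mean (\<lambda>z. h z - 1) r - h2_mean h r)"
    by (rule sums_diff[OF A B])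
  have "(\<lambda>n. (cmod (c n - (if n = 0 then 1 else 0)))^2 * r^(2*n) - (cmod (c n))^2 * r^(2*n))
      = (\<lambda>n. if n = 0 then (cmod (c n - 1))^2 * r^(2*n) - (cmod (c n))^2 * r^(2*n) else 0)"
    by auto
  moreover have "(\<lambda>n. if n = 0 then (cmod (c n - 1))^2 * r^(2*n) - (cmod (c n))^2 * r^(2*n) else 0) sums ((cmod (c 0 - 1))^2 * r^(2*0) - (cmod (c 0))^2 * r^(2*0))"
    by (rule sums_single)
  ultimately have "h2_mean (\<lambda>z. h z - 1) r - h2_mean h r = (cmod (c 0 - 1))^2 - (cmod (c 0))^2"
    using D sums_unique2 by fastforce
  then show ?thesis using c0 by simp
qed

lemma poly_bound:
  assumes "z \<in> ball 0 1"
  shows "cmod (\<Sum>n<N. a n * z^n) \<le> (\<Sum>n<N. cmod (a n))"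
proof -
  have "cmod (\<Sum>n<N. a n * z^n) \<le> (\<Sum>n<N. cmod (a n * z^n))" by (rule norm_sum)
  also have "\<dots> \<le> (\<Sum>n<N. cmod (a n))"
  proof (rule sum_mono)
    fix n
    have "cmod z ^ n \<le> 1" using assms by (intro power_le_one) auto
    then show "cmod (a n * z^n) \<le> cmod (a n)" by (simp add: norm_mult norm_power mult_left_le)
  qed
  finally show ?thesis .
qed

lemma key:
  assumes v: "v holomorphic_on ball 0 1" and bnd: "\<And>z. z \<in> ball 0 1 \<Longrightarrow> exp (Re (v z)) \<le> M"
    and M: "1 \<le> M" and f: "f \<in> H2" and e: "\<epsilon> > 0"
  shows "\<exists>\<delta>>0. \<forall>s. 0 \<le> s \<and> s < \<delta> \<longrightarrow> (\<forall>r. 0 \<le> r \<and> r < 1 \<longrightarrow> h2_mean (\<lambda>z. (psi v s z - 1) * f z) r \<le> \<epsilon>)"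
proof -
  have holf: "f holomorphic_on ball 0 1" using f by (simp add: H2_def)
  obtain a where ser: "\<And>z. z \<in> ball 0 1 \<Longrightarrow> (\<lambda>n. a n * z^n) sums f z" and sa: "summable (\<lambda>n. (cmod (a n))^2)"
    using H2_coeffs[OF f] by blast
  define C where "C = M + 1"
  have C0: "C > 0" using M by (simp add: C_def)
  define \<eta> where "\<eta> = \<epsilon> / (4 * C^2)"
  have eta: "\<eta> > 0" using e C0 by (simp add: \<eta>_def)
  obtain N where N: "\<And>r. 0 \<le> r \<Longrightarrow> r < 1 \<Longrightarrow> h2_mean (\<lambda>z. f z - (\<Sum>n<N. a n * z^n)) r \<le> \<eta>"
    using tail_approx[OF ser sa eta] by blast
  define P where "P = (\<Sum>n<N. cmod (a n))"
  define p where "p z = (\<Sum>n<N. a n * z^n)" for z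
  define q where "q z = f z - p z" for z
  have P0: "0 \<le> P" unfolding P_def by (intro sum_nonneg) auto
  define E where "E s = (cmod (exp (complex_of_real s * v 0) - 1))^2 - (cmod (exp (complex_of_real s * v 0)))^2 + (M powr s)^2" for s
  have Elim: "(E \<longlongrightarrow> 0) (at 0)" unfolding E_def by (rule E_lim[OF M])
  define \<epsilon>1 where "\<epsilon>1 = \<epsilon> / (4 * (P^2 + 1))"
  have "4 * (P^2 + 1) > 0" by (simp add: add_nonneg_pos)
  then have e1: "\<epsilon>1 > 0" using e unfolding \<epsilon>1_def by (intro divide_pos_pos)
  obtain \<delta>1 where d1: "\<delta>1 > 0" and d1E: "\<And>s. s \<noteq> 0 \<and> norm (s - 0) < \<delta>1 \<Longrightarrow> norm (E s - 0) < \<epsilon>1"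
    using LIM_D[OF Elim e1] by blast
  have E0: "E 0 = 0" using M by (simp add: E_def)
  show ?thesis
  proof (intro exI[of _ "min \<delta>1 1"] conjI allI impI)
    show "0 < min \<delta>1 1" using d1 by simp
    fix s r :: real
    assume s: "0 \<le> s \<and> s < min \<delta>1 1" and r: "0 \<le> r \<and> r < 1"
    have Es: "E s \<le> \<epsilon>1"
    proof (cases "s = 0")
      case True then show ?thesis using E0 e1 by simp
    next
      case False then show ?thesis using d1E[of s] s by fastforce
    qed
    have holpsi: "psi v s holomorphic_on ball 0 1" by (rule psi_holo[OF v])
    have hg: "h2_mean (\<lambda>z. psi v s z - 1) r \<le> \<epsilon>1"
    proof -
      have "h2_mean (\<lambda>z. psi v s z - 1) r = (cmod (psi v s 0 - 1))^2 - (cmod (psi v s 0))^2 + h2_mean (psi v s) r"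
        using mean_minus_one[OF holpsi] r by blast
      also have "h2_mean (psi v s) r \<le> (M powr s)^2"
        by (rule h2_mean_bound[OF holomorphic_on_imp_continuous_on[OF holpsi]]) (use psi_bound[OF bnd] s r in auto)
      finally show ?thesis using Es unfolding E_def psi_def by simp
    qed
    have hq: "h2_mean q r \<le> \<eta>" using N r unfolding q_def p_def by blast
    have holp: "p holomorphic_on ball 0 1" unfolding p_def by (intro holomorphic_intros)
    have holq: "q holomorphic_on ball 0 1" unfolding q_def using holf holp by (intro holomorphic_intros)
    have holg: "(\<lambda>z. psi v s z - 1) holomorphic_on ball 0 1" using holpsi by (intro holomorphic_intros)
    have holgf: "(\<lambda>z. (psi v s z - 1) * f z) holomorphic_on ball 0 1" using holg holf holpsi by (intro holomorphic_intros)
    have pw: "(cmod ((psi v s z - 1) * f z))^2 \<le> 2*P^2 * (cmod (psi v s z - 1))^2 + 2*C^2 * (cmod (q z))^2"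
      if z: "z \<in> ball 0 1" for z
    proof (rule sq_ineq)
      have "cmod (psi v s z - 1) \<le> cmod (psi v s z) + 1" using norm_triangle_ineq4[of "psi v s z" 1] by simp
      also have "cmod (psi v s z) \<le> M powr 1" using psi_bound1[OF bnd M, where s=s and T=1 and z=z] s z by simp
      finally show "cmod (psi v s z - 1) \<le> C" using M by (simp add: C_def)
      show "cmod (p z) \<le> P" unfolding p_def P_def by (rule poly_bound[OF z])
      have "f z = p z + q z" by (simp add: q_def)
      then have "cmod ((psi v s z - 1) * f z) = cmod (psi v s z - 1) * cmod (p z + q z)" by (simp add: norm_mult)
      also have "\<dots> \<le> cmod (psi v s z - 1) * (cmod (p z) + cmod (q z))"
        by (intro mult_left_mono norm_triangle_ineq) auto
      finally show "cmod ((psi v s z - 1) * f z) \<le> cmod (psi v s z - 1) * (cmod (p z) + cmod (q z))" .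
    qed auto
    have "h2_mean (\<lambda>z. (psi v s z - 1) * f z) r \<le> 2*P^2 * h2_mean (\<lambda>z. psi v s z - 1) r + 2*C^2 * h2_mean q r"
      by (rule h2_mean_mono2[OF holomorphic_on_imp_continuous_on[OF holgf] holomorphic_on_imp_continuous_on[OF holg]
            holomorphic_on_imp_continuous_on[OF holq] pw]) (use r in auto)
    also have "\<dots> \<le> 2*P^2 * \<epsilon>1 + 2*C^2 * \<eta>"
      using hg hq by (intro add_mono mult_left_mono) auto
    also have "2*C^2 * \<eta> = \<epsilon>/2" using C0 by (simp add: \<eta>_def)
    also have "2*P^2 * \<epsilon>1 \<le> \<epsilon>/2"
    proof -
      have nz: "(2::real) + 2*P^2 \<noteq> 0" "(4::real) + 4*P^2 \<noteq> 0" "P^2 + 1 \<noteq> 0" "1 + P^2 \<noteq> 0"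
        using zero_le_power2[of P] by linarith+
      have "2*P^2 * \<epsilon>1 = (\<epsilon>/2) * (P^2 / (P^2 + 1))" using nz by (simp add: \<epsilon>1_def field_simps)
      also have "\<dots> \<le> (\<epsilon>/2) * 1"
      proof (intro mult_left_mono)
        have "P^2 + 1 > 0" using zero_le_power2[of P] by linarith
        then show "P^2 / (P^2 + 1) \<le> 1" by (simp add: divide_le_eq_1)
      qed (use e in auto)
      finally show ?thesis by simp
    qed
    finally show "h2_mean (\<lambda>z. (psi v s z - 1) * f z) r \<le> \<epsilon>" by simp
  qed
qed



lemma h2_norm_le:
  assumes "\<And>r. 0 \<le> r \<Longrightarrow> r < 1 \<Longrightarrow> h2_mean g r \<le> b"
  shows "0 \<le> h2_norm g \<and> h2_norm g \<le> sqrt b"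
proof -
  have bdd: "bdd_above (h2_mean g ` {0..<1})" using assms by (auto intro!: bdd_aboveI2)
  have "h2_mean g 0 \<le> (SUP r\<in>{0..<1}. h2_mean g r)" by (rule cSUP_upper[OF _ bdd]) simp
  then have "0 \<le> (SUP r\<in>{0..<1}. h2_mean g r)" using h2_mean_nonneg[of g 0] by linarith
  moreover have "(SUP r\<in>{0..<1}. h2_mean g r) \<le> b" by (rule cSUP_least) (use assms in auto)
  ultimately show ?thesis unfolding h2_norm_def by auto
qed

lemma psi_add: "psi v (t + s) z = psi v t z * psi v s z"
  unfolding psi_def by (simp add: distrib_right exp_add)

lemma psi_zero: "psi v 0 z = 1"
  unfolding psi_def by simp

lemma mult_sq_bound:
  assumes "cmod w \<le> K"
  shows "(cmod (w * u))^2 \<le> K^2 * (cmod u)^2"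
proof -
  have "(cmod (w * u))^2 = (cmod w)^2 * (cmod u)^2" by (simp add: norm_mult power_mult_distrib)
  also have "\<dots> \<le> K^2 * (cmod u)^2" using assms by (intro mult_right_mono power_mono) auto
  finally show ?thesis .
qed

lemma strong_cont:
  assumes v: "v holomorphic_on ball 0 1" and bnd: "\<And>z. z \<in> ball 0 1 \<Longrightarrow> exp (Re (v z)) \<le> M"
    and M: "1 \<le> M" and f: "f \<in> H2" and t0: "t0 \<ge> 0"
  shows "((\<lambda>t. h2_norm (\<lambda>z. psi v t z * f z - psi v t0 z * f z)) \<longlongrightarrow> 0) (at t0 within {0..})"
proof (rule tendstoI)
  fix \<epsilon> :: real assume e: "\<epsilon> > 0"
  have holf: "f holomorphic_on ball 0 1" using f by (simp add: H2_def)
  define K where "K = M powr (t0 + 1)"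
  have K1: "K \<ge> 1" unfolding K_def using M t0 by (intro ge_one_powr_ge_zero) auto
  define \<epsilon>' where "\<epsilon>' = \<epsilon>^2 / (2 * K^2)"
  have e': "\<epsilon>' > 0" using e K1 by (simp add: \<epsilon>'_def)
  obtain \<delta> where d: "\<delta> > 0" and dk: "\<And>s r. 0 \<le> s \<Longrightarrow> s < \<delta> \<Longrightarrow> 0 \<le> r \<Longrightarrow> r < 1 \<Longrightarrow> h2_mean (\<lambda>z. (psi v s z - 1) * f z) r \<le> \<epsilon>'"
    using key[OF v bnd M f e'] by blast
  show "eventually (\<lambda>t. dist (h2_norm (\<lambda>z. psi v t z * f z - psi v t0 z * f z)) 0 < \<epsilon>) (at t0 within {0..})"
    unfolding eventually_at
  proof (intro exI[of _ "min \<delta> 1"] conjI ballI impI)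
    show "0 < min \<delta> 1" using d by simp
    fix t :: real assume t: "t \<in> {0..}" and tt: "t \<noteq> t0 \<and> dist t t0 < min \<delta> 1"
    define s where "s = \<bar>t - t0\<bar>"
    have s: "0 \<le> s" "s < \<delta>" using tt by (auto simp: s_def dist_real_def)
    have pw: "(cmod (psi v t z * f z - psi v t0 z * f z))^2 \<le> K^2 * (cmod ((psi v s z - 1) * f z))^2"
      if z: "z \<in> ball 0 1" for z
    proof (cases "t0 \<le> t")
      case True
      have "psi v t z = psi v t0 z * psi v s z" using True psi_add[of v t0 s z] by (simp add: s_def)
      then have eq: "psi v t z * f z - psi v t0 z * f z = psi v t0 z * ((psi v s z - 1) * f z)"
        by (simp add: algebra_simps)
      have "cmod (psi v t0 z) \<le> K" unfolding K_def by (rule psi_bound1[OF bnd M]) (use t0 z in auto)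
      then show ?thesis unfolding eq by (rule mult_sq_bound)
    next
      case False
      have "psi v t0 z = psi v t z * psi v s z" using False psi_add[of v t s z] by (simp add: s_def)
      then have eq: "psi v t z * f z - psi v t0 z * f z = (- psi v t z) * ((psi v s z - 1) * f z)"
        by (simp add: algebra_simps)
      have "cmod (- psi v t z) \<le> K" unfolding K_def norm_minus_cancel
        by (rule psi_bound1[OF bnd M]) (use t z False tt in auto)
      then show ?thesis unfolding eq by (rule mult_sq_bound)
    qed
    have holpsi: "\<And>u. psi v u holomorphic_on ball 0 1" by (rule psi_holo[OF v])
    have hm: "h2_mean (\<lambda>z. psi v t z * f z - psi v t0 z * f z) r \<le> \<epsilon>^2 / 2" if r: "0 \<le> r" "r < 1" for r
    proof -
      have c1: "continuous_on (ball 0 1) (\<lambda>z. psi v t z * f z - psi v t0 z * f z)"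
        by (intro holomorphic_on_imp_continuous_on holomorphic_intros holpsi holf)
      have c2: "continuous_on (ball 0 1) (\<lambda>z. (psi v s z - 1) * f z)"
        by (intro holomorphic_on_imp_continuous_on holomorphic_intros holpsi holf)
      have "h2_mean (\<lambda>z. psi v t z * f z - psi v t0 z * f z) r \<le> K^2 * h2_mean (\<lambda>z. (psi v s z - 1) * f z) r"
        by (rule h2_mean_mono1[OF c1 c2 pw r])
      also have "\<dots> \<le> K^2 * \<epsilon>'" using dk[OF s r] by (intro mult_left_mono) auto
      also have "\<dots> = \<epsilon>^2 / 2" using K1 by (simp add: \<epsilon>'_def)
      finally show ?thesis .
    qed
    have nb: "0 \<le> h2_norm (\<lambda>z. psi v t z * f z - psi v t0 z * f z) \<and> h2_norm (\<lambda>z. psi v t z * f z - psi v t0 z * f z) \<le> sqrt (\<epsilon>^2/2)"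
      by (rule h2_norm_le) (use hm in auto)
    have "sqrt (\<epsilon>^2/2) < sqrt (\<epsilon>^2)" using e by (intro real_sqrt_less_mono) auto
    also have "sqrt (\<epsilon>^2) = \<epsilon>" using e by simp
    finally show "dist (h2_norm (\<lambda>z. psi v t z * f z - psi v t0 z * f z)) 0 < \<epsilon>"
      using nb by (simp add: dist_real_def)
  qed
qed

lemma mult_H2:
  assumes v: "v holomorphic_on ball 0 1" and bnd: "\<And>z. z \<in> ball 0 1 \<Longrightarrow> exp (Re (v z)) \<le> M"
    and M: "1 \<le> M" and f: "f \<in> H2" and t: "t \<ge> 0"
  shows "(\<lambda>z. psi v t z * f z) \<in> H2"
proof -
  have holf: "f holomorphic_on ball 0 1" using f by (simp add: H2_def)
  have hol: "(\<lambda>z. psi v t z * f z) holomorphic_on ball 0 1"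
    using psi_holo[OF v] holf by (intro holomorphic_intros)
  have "bdd_above (h2_mean f ` {0..<1})" using f by (simp add: H2_def)
  then obtain B where "\<forall>x\<in>h2_mean f ` {0..<1}. x \<le> B" by (auto simp: bdd_above_def)
  then have B: "\<And>r. r \<in> {0..<1} \<Longrightarrow> h2_mean f r \<le> B" by blast
  have "h2_mean (\<lambda>z. psi v t z * f z) r \<le> (M powr t)^2 * B" if r: "r \<in> {0..<1}" for r
  proof -
    have "h2_mean (\<lambda>z. psi v t z * f z) r \<le> (M powr t)^2 * h2_mean f r"
    proof (rule h2_mean_mono1)
      show "continuous_on (ball 0 1) (\<lambda>z. psi v t z * f z)" by (rule holomorphic_on_imp_continuous_on[OF hol])
      show "continuous_on (ball 0 1) f" by (rule holomorphic_on_imp_continuous_on[OF holf])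
      show "(cmod (psi v t z * f z))^2 \<le> (M powr t)^2 * (cmod (f z))^2" if "z \<in> ball 0 1" for z
        by (rule mult_sq_bound) (rule psi_bound[OF bnd t that])
    qed (use r in auto)
    also have "\<dots> \<le> (M powr t)^2 * B" using B[OF r] by (intro mult_left_mono) auto
    finally show ?thesis .
  qed
  then have "bdd_above (h2_mean (\<lambda>z. psi v t z * f z) ` {0..<1})" by (rule bdd_aboveI2)
  with hol show ?thesis by (simp add: H2_def)
qed

theorem mainTheorem6:
  fixes \<phi> :: "complex \<Rightarrow> complex"
  assumes "\<phi> \<in> Hinf" and "outer \<phi>"
  shows "embeddable_toeplitz_semigroup (\<lambda>f z. \<phi> z * f z)"
proof -
  have holphi: "\<phi> holomorphic_on ball 0 1" and bdphi: "bounded (\<phi> ` ball 0 1)"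
    using assms(1) by (auto simp: Hinf_def)
  obtain M0 where M0: "\<And>z. z \<in> ball 0 1 \<Longrightarrow> cmod (\<phi> z) \<le> M0"
    using bdphi unfolding bounded_iff by (metis image_eqI)
  define M where "M = max 1 M0"
  have M: "1 \<le> M" by (simp add: M_def)
  have nz: "\<phi> z \<noteq> 0" if "z \<in> ball 0 1" for z
  proof -
    obtain c k where c: "cmod c = 1" and eq: "\<forall>z\<in>ball 0 1. \<phi> z = c * exp (integral {0..2*pi}
        (\<lambda>t. (cis t + z) / (cis t - z) * of_real (ln (k (cis t)))) / (2*pi))"
      using assms(2) unfolding outer_def by blast
    have "c \<noteq> 0" using c by auto
    then show ?thesis using eq that by simp
  qed
  obtain v where v: "v holomorphic_on ball 0 1" and ev: "\<And>z. z \<in> ball 0 1 \<Longrightarrow> exp (v z) = \<phi> z"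
    using holomorphic_logarithm_exists[of "ball 0 1" \<phi> 0] holphi nz by auto
  have bnd: "exp (Re (v z)) \<le> M" if "z \<in> ball 0 1" for z
  proof -
    have "exp (Re (v z)) = cmod (\<phi> z)" using ev[OF that] by (metis norm_exp_eq_Re)
    also have "\<dots> \<le> M" using M0[OF that] by (simp add: M_def)
    finally show ?thesis .
  qed
  define T where "T t f = (\<lambda>z. psi v t z * f z)" for t and f :: "complex \<Rightarrow> complex"
  have "C0_semigroup_H2 T"
    unfolding C0_semigroup_H2_def
  proof (intro conjI allI impI ballI)
    show "T t f \<in> H2" if "t \<ge> 0" "f \<in> H2" for t f
      unfolding T_def by (rule mult_H2[OF v bnd M that(2) that(1)])
    show "T 0 f z = f z" for f z unfolding T_def by (simp add: psi_zero)
    show "T (t + s) f z = T t (T s f) z" for t s f z unfolding T_def by (simp add: psi_add)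
    show "((\<lambda>t. h2_norm (\<lambda>z. T t f z - T t0 f z)) \<longlongrightarrow> 0) (at t0 within {0..})"
      if "f \<in> H2" "t0 \<ge> 0" for f t0
      unfolding T_def by (rule strong_cont[OF v bnd M that])
  qed
  moreover have "analytic_toeplitz_op (T t)" if t: "t \<ge> 0" for t
    unfolding analytic_toeplitz_op_def
  proof (rule bexI[of _ "psi v t"])
    show "is_toeplitz_with (psi v t) (T t)" by (simp add: is_toeplitz_with_def T_def)
    have "bounded (psi v t ` ball 0 1)"
      unfolding bounded_iff using psi_bound[where v=v and M=M, OF bnd t] by blast
    then show "psi v t \<in> Hinf" using psi_holo[OF v] by (simp add: Hinf_def)
  qed
  moreover have "T 1 f z = \<phi> z * f z" if "z \<in> ball 0 1" for f z
    unfolding T_def psi_def using ev[OF that] by simp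
  ultimately show ?thesis unfolding embeddable_toeplitz_semigroup_def by blast
qed


end
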